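(* Let $\mathfrak{s}(1/1)$ be the complex Lie superalgebra described in the context, let $d\in\mathbb{R}$, let $m\neq 0$, and let $V^d$ be the Verma module over $\mathfrak{s}(1/1)$ with lowest weight vector $v_0$ satisfying $\mathcal{Q}v_0=Pv_0=0$, $Dv_0=-d\,v_0$, $Mv_0=m\,v_0$, $\mathcal{X}v_0=\chi v_0$, where $\chi$ is an odd (Grassmann) parameter with $m=2\chi^2$. Then $V^d$ has precisely one singular vector (up to a nonzero scalar multiple) if and only if $d+\tfrac12\in\mathbb{Z}_{\geq 0}$, and in that case it is $$v_s=(G^2-2mK)^{d+1/2}\,(G-2\chi\mathcal{S})\,v_0 .$$
   Context: $\mathfrak{s}(1/1)$ (the $\mathcal{N}=1$ super Schrödinger algebra in $(1+1)$-dimensional spacetime) is the Lie superalgebra with even basis $H,D,K,P,G,M$ and odd basis $\mathcal{Q},\mathcal{S},\mathcal{X}$, whose nonvanishing brackets among basis elements are (up to (anti)symmetry): $[H,D]=2H$, $[H,K]=D$, $[D,K]=2K$, $[P,G]=M$, $[H,G]=P$, $[D,G]=G$, $[P,D]=P$, $[P,K]=G$; $\{\mathcal{Q},\mathcal{Q}\}=-2H$, $\{\mathcal{S},\mathcal{S}\}=-2K$, $\{\mathcal{X},\mathcal{X}\}=-M$, $\{\mathcal{Q},\mathcal{X}\}=-P$, $\{\mathcal{S},\mathcal{X}\}=-G$, $\{\mathcal{Q},\mathcal{S}\}=-D$; $[\mathcal{Q},D]=\mathcal{Q}$, $[\mathcal{Q},K]=\mathcal{S}$, $[D,\mathcal{S}]=\mathcal{S}$,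 $[H,\mathcal{S}]=\mathcal{Q}$, $[\mathcal{Q},G]=\mathcal{X}$, $[P,\mathcal{S}]=\mathcal{X}$. It is $\mathbb{Z}$-graded by $\deg K=2$, $\deg G=\deg\mathcal{S}=1$, $\deg D=\deg M=\deg\mathcal{X}=0$, $\deg P=\deg\mathcal{Q}=-1$, $\deg H=-2$; $\mathfrak{g}^+$, $\mathfrak{g}^0$, $\mathfrak{g}^-$ denote the spans of the generators of positive, zero, negative degree. A lowest weight vector $v_0$ is annihilated by $\mathfrak{g}^-$ and is an eigenvector of $\mathfrak{g}^0$ as stated in the claim (the odd parameter $\chi$ anticommutes with the odd generators). The Verma module is $V^d=U(\mathfrak{g}^+)v_0$, with basis $\{G^kK^\ell v_0,\ G^kK^\ell\mathcal{S}v_0 : k,\ell\in\mathbb{Z}_{\ge 0}\}$. A singular vector is a homogeneous element $v_s\in V^d$ (an eigenvector of $D$) with $v_s\notin\mathbb{C}v_0$ and $\mathfrak{g}^-v_s=0$. *)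

theory Defs
  imports Complex_Main
begin

definition comm :: "('v::ab_group_add \<Rightarrow> 'v) \<Rightarrow> ('v \<Rightarrow> 'v) \<Rightarrow> 'v \<Rightarrow> 'v" where
  "comm A B = (\<lambda>v. A (B v) - B (A v))"

definition acomm :: "('v::ab_group_add \<Rightarrow> 'v) \<Rightarrow> ('v \<Rightarrow> 'v) \<Rightarrow> 'v \<Rightarrow> 'v" where
  "acomm A B = (\<lambda>v. A (B v) + B (A v))"

text \<open>A representation of the N=1 super Schroedinger algebra s(1/1) on the complex vector
  space (V, scale): even generators H D K P G M, odd generators Q S X, acting by linear maps,
  with the supercommutator of basis elements realised as commutator (at least one even entry)
  resp. anticommutator (both odd).  All brackets not listed in the paper vanish.\<close>

definition s11_rep ::
  "(complex \<Rightarrow> 'v::ab_group_add \<Rightarrow> 'v) \<Rightarrow>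
   ('v \<Rightarrow> 'v) \<Rightarrow> ('v \<Rightarrow> 'v) \<Rightarrow> ('v \<Rightarrow> 'v) \<Rightarrow> ('v \<Rightarrow> 'v) \<Rightarrow> ('v \<Rightarrow> 'v) \<Rightarrow> ('v \<Rightarrow> 'v) \<Rightarrow>
   ('v \<Rightarrow> 'v) \<Rightarrow> ('v \<Rightarrow> 'v) \<Rightarrow> ('v \<Rightarrow> 'v) \<Rightarrow> bool" where
  "s11_rep scale H D K P G M Q S X \<longleftrightarrow>
     vector_space scale \<and>
     (\<forall>A \<in> {H, D, K, P, G, M, Q, S, X}. Vector_Spaces.linear scale scale A) \<and>
     \<comment> \<open>even-even brackets\<close>
     comm H D = (\<lambda>v. scale 2 (H v)) \<and>
     comm H K = D \<and>
     comm D K = (\<lambda>v. scale 2 (K v)) \<and>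
     comm P G = M \<and>
     comm H G = P \<and>
     comm D G = G \<and>
     comm P D = P \<and>
     comm P K = G \<and>
     comm H P = (\<lambda>v. 0) \<and> comm H M = (\<lambda>v. 0) \<and> comm D M = (\<lambda>v. 0) \<and>
     comm K G = (\<lambda>v. 0) \<and> comm K M = (\<lambda>v. 0) \<and> comm P M = (\<lambda>v. 0) \<and>
     comm G M = (\<lambda>v. 0) \<and>
     \<comment> \<open>odd-odd brackets\<close>
     acomm Q Q = (\<lambda>v. scale (-2) (H v)) \<and>
     acomm S S = (\<lambda>v. scale (-2) (K v)) \<and>
     acomm X X = (\<lambda>v. - M v) \<and>
     acomm Q X = (\<lambda>v. - P v) \<and>
     acomm S X = (\<lambda>v. - G v) \<and>
     acomm Q S = (\<lambda>v. - D v) \<and>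
     \<comment> \<open>odd-even brackets\<close>
     comm Q D = Q \<and>
     comm Q K = S \<and>
     comm D S = S \<and>
     comm H S = Q \<and>
     comm Q G = X \<and>
     comm P S = X \<and>
     comm H Q = (\<lambda>v. 0) \<and> comm H X = (\<lambda>v. 0) \<and> comm D X = (\<lambda>v. 0) \<and>
     comm K S = (\<lambda>v. 0) \<and> comm K X = (\<lambda>v. 0) \<and> comm P Q = (\<lambda>v. 0) \<and>
     comm P X = (\<lambda>v. 0) \<and> comm G S = (\<lambda>v. 0) \<and> comm G X = (\<lambda>v. 0) \<and>
     comm M Q = (\<lambda>v. 0) \<and> comm M S = (\<lambda>v. 0) \<and> comm M X = (\<lambda>v. 0)"

text \<open>The odd Grassmann parameter chi, realised as left multiplication by chi on V:
  a linear map commuting with the even generators, anticommuting with the odd ones,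
  and with m = 2 chi^2.\<close>

definition odd_param ::
  "(complex \<Rightarrow> 'v::ab_group_add \<Rightarrow> 'v) \<Rightarrow>
   ('v \<Rightarrow> 'v) \<Rightarrow> ('v \<Rightarrow> 'v) \<Rightarrow> ('v \<Rightarrow> 'v) \<Rightarrow> ('v \<Rightarrow> 'v) \<Rightarrow> ('v \<Rightarrow> 'v) \<Rightarrow> ('v \<Rightarrow> 'v) \<Rightarrow>
   ('v \<Rightarrow> 'v) \<Rightarrow> ('v \<Rightarrow> 'v) \<Rightarrow> ('v \<Rightarrow> 'v) \<Rightarrow> ('v \<Rightarrow> 'v) \<Rightarrow> complex \<Rightarrow> bool" where
  "odd_param scale H D K P G M Q S X chi m \<longleftrightarrow>
     Vector_Spaces.linear scale scale chi \<and>
     (\<forall>A \<in> {H, D, K, P, G, M}. comm A chi = (\<lambda>v. 0)) \<and>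
     (\<forall>A \<in> {Q, S, X}. acomm A chi = (\<lambda>v. 0)) \<and>
     (\<forall>v. scale m v = scale 2 (chi (chi v)))"

text \<open>Scalars are C + C chi.  A scalar multiple (a + b chi) v.\<close>

definition smult_chi :: "(complex \<Rightarrow> 'v::ab_group_add \<Rightarrow> 'v) \<Rightarrow> ('v \<Rightarrow> 'v) \<Rightarrow> complex \<Rightarrow> complex \<Rightarrow> 'v \<Rightarrow> 'v" where
  "smult_chi scale chi a b v = scale a v + scale b (chi v)"

text \<open>Verma module condition: the vectors chi^c G^k K^l S^e v0 (c, e in {0,1}) form a
  basis over C, i.e. G^k K^l v0, G^k K^l S v0 form a basis over the scalars C + C chi.\<close>

definition pbw_vec :: "('v \<Rightarrow> 'v) \<Rightarrow> ('v \<Rightarrow> 'v) \<Rightarrow> ('v \<Rightarrow> 'v) \<Rightarrow> ('v \<Rightarrow> 'v) \<Rightarrow> 'v \<Rightarrow>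
    bool \<times> nat \<times> nat \<times> bool \<Rightarrow> 'v" where
  "pbw_vec G K S chi v0 = (\<lambda>(c, k, l, e).
     (if c then chi else id) ((G ^^ k) ((K ^^ l) ((if e then S else id) v0))))"

definition verma_basis :: "(complex \<Rightarrow> 'v::ab_group_add \<Rightarrow> 'v) \<Rightarrow>
    ('v \<Rightarrow> 'v) \<Rightarrow> ('v \<Rightarrow> 'v) \<Rightarrow> ('v \<Rightarrow> 'v) \<Rightarrow> ('v \<Rightarrow> 'v) \<Rightarrow> 'v \<Rightarrow> bool" where
  "verma_basis scale G K S chi v0 \<longleftrightarrow>
     inj (pbw_vec G K S chi v0) \<and>
     \<not> module.dependent scale (range (pbw_vec G K S chi v0)) \<and>
     module.span scale (range (pbw_vec G K S chi v0)) = UNIV"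

definition singular_vec :: "(complex \<Rightarrow> 'v::ab_group_add \<Rightarrow> 'v) \<Rightarrow>
    ('v \<Rightarrow> 'v) \<Rightarrow> ('v \<Rightarrow> 'v) \<Rightarrow> ('v \<Rightarrow> 'v) \<Rightarrow> ('v \<Rightarrow> 'v) \<Rightarrow> ('v \<Rightarrow> 'v) \<Rightarrow> 'v \<Rightarrow> 'v \<Rightarrow> bool" where
  "singular_vec scale H D P Q chi v0 v \<longleftrightarrow>
     (\<exists>c. D v = scale c v) \<and>
     (\<nexists>a b. v = smult_chi scale chi a b v0) \<and>
     H v = 0 \<and> P v = 0 \<and> Q v = 0"

definition unique_singular :: "(complex \<Rightarrow> 'v::ab_group_add \<Rightarrow> 'v) \<Rightarrow>
    ('v \<Rightarrow> 'v) \<Rightarrow> ('v \<Rightarrow> 'v) \<Rightarrow> ('v \<Rightarrow> 'v) \<Rightarrow> ('v \<Rightarrow> 'v) \<Rightarrow> ('v \<Rightarrow> 'v) \<Rightarrow> 'v \<Rightarrow> 'v \<Rightarrow> bool" where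
  "unique_singular scale H D P Q chi v0 vs \<longleftrightarrow>
     singular_vec scale H D P Q chi v0 vs \<and>
     (\<forall>w. singular_vec scale H D P Q chi v0 w \<longrightarrow>
        (\<exists>a b. (a, b) \<noteq> (0, 0) \<and> w = smult_chi scale chi a b vs))"

end

theory Submission
  imports Defs
begin

lemma lin_add: "Vector_Spaces.linear s s A \<Longrightarrow> A (x + y) = A x + A y"
  by (simp add: Vector_Spaces.linear_iff)
lemma lin_scale: "Vector_Spaces.linear s s A \<Longrightarrow> A (s c x) = s c (A x)"
  by (simp add: Vector_Spaces.linear_iff)

locale SS =
  fixes scale :: "complex \<Rightarrow> 'v::ab_group_add \<Rightarrow> 'v"
    and H D K P G M Q S X chi :: "'v \<Rightarrow> 'v"
    and v0 :: 'v and d :: real and m :: complex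
  assumes rep: "s11_rep scale H D K P G M Q S X"
    and chi: "odd_param scale H D K P G M Q S X chi m"
    and mnz: "m \<noteq> 0"
    and lwQ: "Q v0 = 0" and lwP: "P v0 = 0" and lwD: "D v0 = scale (- complex_of_real d) v0"
    and lwM: "M v0 = scale m v0" and lwX: "X v0 = chi v0"
    and verma: "verma_basis scale G K S chi v0"
begin

sublocale vector_space scale
  using rep by (simp add: s11_rep_def)

lemma linH: "Vector_Spaces.linear scale scale H" using rep by (simp add: s11_rep_def)
lemma linD: "Vector_Spaces.linear scale scale D" using rep by (simp add: s11_rep_def)
lemma linK: "Vector_Spaces.linear scale scale K" using rep by (simp add: s11_rep_def)
lemma linP: "Vector_Spaces.linear scale scale P" using rep by (simp add: s11_rep_def)
lemma linG: "Vector_Spaces.linear scale scale G" using rep by (simp add: s11_rep_def)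
lemma linM: "Vector_Spaces.linear scale scale M" using rep by (simp add: s11_rep_def)
lemma linQ: "Vector_Spaces.linear scale scale Q" using rep by (simp add: s11_rep_def)
lemma linS: "Vector_Spaces.linear scale scale S" using rep by (simp add: s11_rep_def)
lemma linX: "Vector_Spaces.linear scale scale X" using rep by (simp add: s11_rep_def)
lemma linchi: "Vector_Spaces.linear scale scale chi" using chi by (simp add: odd_param_def)

lemmas lins = linH linD linK linP linG linM linQ linS linX linchi

lemma ladd[simp]: "H (x+y) = H x + H y" "D (x+y) = D x + D y" "K (x+y) = K x + K y"
  "P (x+y) = P x + P y" "G (x+y) = G x + G y" "M (x+y) = M x + M y" "Q (x+y) = Q x + Q y"
  "S (x+y) = S x + S y" "X (x+y) = X x + X y" "chi (x+y) = chi x + chi y"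
  using lins by (simp_all add: lin_add)
lemma lscale[simp]: "H (scale c x) = scale c (H x)" "D (scale c x) = scale c (D x)" "K (scale c x) = scale c (K x)"
  "P (scale c x) = scale c (P x)" "G (scale c x) = scale c (G x)" "M (scale c x) = scale c (M x)" "Q (scale c x) = scale c (Q x)"
  "S (scale c x) = scale c (S x)" "X (scale c x) = scale c (X x)" "chi (scale c x) = scale c (chi x)"
  using lins by (simp_all add: lin_scale)

lemma l0[simp]: "H 0 = 0" "D 0 = 0" "K 0 = 0" "P 0 = 0" "G 0 = 0" "M 0 = 0" "Q 0 = 0" "S 0 = 0" "X 0 = 0" "chi 0 = 0"
  using lscale[of 0 0] by simp_all

lemma lneg[simp]: "H (-x) = - H x" "D (-x) = - D x" "K (-x) = - K x" "P (-x) = - P x" "G (-x) = - G x"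
   "M (-x) = - M x" "Q (-x) = - Q x" "S (-x) = - S x" "X (-x) = - X x" "chi (-x) = - chi x"
  by (metis add_eq_0_iff ladd l0)+

lemma ldiff[simp]: "H (x-y) = H x - H y" "D (x-y) = D x - D y" "K (x-y) = K x - K y" "P (x-y) = P x - P y" "G (x-y) = G x - G y"
   "M (x-y) = M x - M y" "Q (x-y) = Q x - Q y" "S (x-y) = S x - S y" "X (x-y) = X x - X y" "chi (x-y) = chi x - chi y"
  by (simp_all only: diff_conv_add_uminus ladd lneg)

lemma cm: "comm A B = C \<Longrightarrow> A (B v) = B (A v) + C v"
  unfolding comm_def by (drule fun_cong[of _ _ v]) (simp add: algebra_simps)
lemma cm0: "comm A B = (\<lambda>v. 0) \<Longrightarrow> A (B v) = B (A v)"
  unfolding comm_def by (drule fun_cong[of _ _ v]) (simp add: algebra_simps)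
lemma acm: "acomm A B = C \<Longrightarrow> A (B v) = - B (A v) + C v"
  unfolding acomm_def by (drule fun_cong[of _ _ v]) (simp add: algebra_simps)
lemma acm0: "acomm A B = (\<lambda>v. 0) \<Longrightarrow> A (B v) = - B (A v)"
  unfolding acomm_def by (drule fun_cong[of _ _ v]) (simp add: algebra_simps eq_neg_iff_add_eq_0)

lemma scale2: "x + x = scale 2 x"
  by (metis one_add_one scale_left_distrib scale_one)

lemma neg2: "scale (-2) y = scale 2 (- y)" by (simp only: scale_minus_left scale_minus_right)

lemma twice_eq: "scale 2 x = scale 2 y \<Longrightarrow> x = y"
  by (metis scale_scale scale_one nonzero_divide_eq_eq zero_neq_numeral divide_self_if
      mult.commute times_divide_eq_right)

lemma R1: "comm P G = M"
  using rep unfolding s11_rep_def apply -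
  apply (erule conjE)+ apply assumption done
lemma R2: "comm P K = G"
  using rep unfolding s11_rep_def apply -
  apply (erule conjE)+ apply assumption done
lemma R3: "comm P S = X"
  using rep unfolding s11_rep_def apply -
  apply (erule conjE)+ apply assumption done
lemma R4: "comm D G = G"
  using rep unfolding s11_rep_def apply -
  apply (erule conjE)+ apply assumption done
lemma R5: "comm D K = (\<lambda>v. scale 2 (K v))"
  using rep unfolding s11_rep_def apply -
  apply (erule conjE)+ apply assumption done
lemma R6: "comm D S = S"
  using rep unfolding s11_rep_def apply -
  apply (erule conjE)+ apply assumption done
lemma R7: "comm Q G = X"
  using rep unfolding s11_rep_def apply -
  apply (erule conjE)+ apply assumption done
lemma R8: "comm Q K = S"
  using rep unfolding s11_rep_def apply -
  apply (erule conjE)+ apply assumption done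
lemma R9: "acomm Q S = (\<lambda>v. - D v)"
  using rep unfolding s11_rep_def apply -
  apply (erule conjE)+ apply assumption done
lemma R10: "acomm S X = (\<lambda>v. - G v)"
  using rep unfolding s11_rep_def apply -
  apply (erule conjE)+ apply assumption done
lemma R11: "comm G X = (\<lambda>v. 0)"
  using rep unfolding s11_rep_def apply -
  apply (erule conjE)+ apply assumption done
lemma R12: "comm K X = (\<lambda>v. 0)"
  using rep unfolding s11_rep_def apply -
  apply (erule conjE)+ apply assumption done
lemma R13: "comm G S = (\<lambda>v. 0)"
  using rep unfolding s11_rep_def apply -
  apply (erule conjE)+ apply assumption done
lemma R14: "comm K S = (\<lambda>v. 0)"
  using rep unfolding s11_rep_def apply -
  apply (erule conjE)+ apply assumption done
lemma R15: "comm K G = (\<lambda>v. 0)"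
  using rep unfolding s11_rep_def apply -
  apply (erule conjE)+ apply assumption done
lemma R16: "comm G M = (\<lambda>v. 0)"
  using rep unfolding s11_rep_def apply -
  apply (erule conjE)+ apply assumption done
lemma R17: "comm K M = (\<lambda>v. 0)"
  using rep unfolding s11_rep_def apply -
  apply (erule conjE)+ apply assumption done
lemma R18: "comm M S = (\<lambda>v. 0)"
  using rep unfolding s11_rep_def apply -
  apply (erule conjE)+ apply assumption done
lemma R19: "acomm S S = (\<lambda>v. scale (-2) (K v))"
  using rep unfolding s11_rep_def apply -
  apply (erule conjE)+ apply assumption done
lemma R20: "acomm Q Q = (\<lambda>v. scale (-2) (H v))"
  using rep unfolding s11_rep_def apply -
  apply (erule conjE)+ apply assumption done
lemmas R = R1 R2 R3 R4 R5 R6 R7 R8 R9 R10 R11 R12 R13 R14 R15 R16 R17 R18 R19 R20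

lemma PG: "P (G v) = G (P v) + M v" by (rule cm[OF R(1)])
lemma PK: "P (K v) = K (P v) + G v" by (rule cm[OF R(2)])
lemma PS: "P (S v) = S (P v) + X v" by (rule cm[OF R(3)])
lemma DG: "D (G v) = G (D v) + G v" by (rule cm[OF R(4)])
lemma DK: "D (K v) = K (D v) + scale 2 (K v)" by (rule cm[OF R(5)])
lemma DS: "D (S v) = S (D v) + S v" by (rule cm[OF R(6)])
lemma QG: "Q (G v) = G (Q v) + X v" by (rule cm[OF R(7)])
lemma QK: "Q (K v) = K (Q v) + S v" by (rule cm[OF R(8)])
lemma QS: "Q (S v) = - S (Q v) - D v" using acm[OF R(9), of v] by simp
lemma XS: "X (S v) = - S (X v) - G v"
  using R(10) unfolding acomm_def by (drule_tac fun_cong[of _ _ v]) (simp add: algebra_simps eq_neg_iff_add_eq_0)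
lemma XG: "X (G v) = G (X v)" by (rule cm0[OF R(11), symmetric])
lemma XK: "X (K v) = K (X v)" by (rule cm0[OF R(12), symmetric])
lemma SG: "S (G v) = G (S v)" by (rule cm0[OF R(13), symmetric])
lemma SK: "S (K v) = K (S v)" by (rule cm0[OF R(14), symmetric])
lemma KG: "K (G v) = G (K v)" by (rule cm0[OF R(15)])
lemma MG: "M (G v) = G (M v)" by (rule cm0[OF R(16), symmetric])
lemma MK: "M (K v) = K (M v)" by (rule cm0[OF R(17), symmetric])
lemma MS: "M (S v) = S (M v)" by (rule cm0[OF R(18)])
lemma SS: "S (S v) = - K v"
proof -
  have "acomm S S = (\<lambda>v. scale (-2) (K v))" by (rule R(19))
  then have "S (S v) + S (S v) = scale (-2) (K v)" unfolding acomm_def by (rule fun_cong)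
  then have "scale 2 (S (S v)) = scale 2 (- K v)" by (simp only: scale2[symmetric] neg2)
  then show ?thesis by (rule twice_eq)
qed
lemma HQQ: "H v = - Q (Q v)"
proof -
  have "acomm Q Q = (\<lambda>v. scale (-2) (H v))" by (rule R(20))
  then have "Q (Q v) + Q (Q v) = scale (-2) (H v)" unfolding acomm_def by (rule fun_cong)
  then have "scale 2 (Q (Q v)) = scale 2 (- H v)" by (simp only: scale2[symmetric] neg2)
  then have "Q (Q v) = - H v" by (rule twice_eq)
  then show ?thesis by simp
qed
lemma Ceven: "\<forall>A\<in>{H, D, K, P, G, M}. comm A chi = (\<lambda>v. 0)"
  using chi unfolding odd_param_def apply - apply (erule conjE)+ apply assumption done
lemma Codd: "\<forall>A\<in>{Q, S, X}. acomm A chi = (\<lambda>v. 0)"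
  using chi unfolding odd_param_def apply - apply (erule conjE)+ apply assumption done
lemma C1: "comm G chi = (\<lambda>v. 0)" by (rule bspec[OF Ceven]) simp
lemma C2: "comm K chi = (\<lambda>v. 0)" by (rule bspec[OF Ceven]) simp
lemma C3: "comm D chi = (\<lambda>v. 0)" by (rule bspec[OF Ceven]) simp
lemma C4: "comm P chi = (\<lambda>v. 0)" by (rule bspec[OF Ceven]) simp
lemma C5: "comm H chi = (\<lambda>v. 0)" by (rule bspec[OF Ceven]) simp
lemma C6: "comm M chi = (\<lambda>v. 0)" by (rule bspec[OF Ceven]) simp
lemma C7: "acomm Q chi = (\<lambda>v. 0)" by (rule bspec[OF Codd]) simp
lemma C8: "acomm S chi = (\<lambda>v. 0)" by (rule bspec[OF Codd]) simp
lemma C9: "acomm X chi = (\<lambda>v. 0)" by (rule bspec[OF Codd]) simp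
lemmas C = C1 C2 C3 C4 C5 C6 C7 C8 C9
lemma chiG: "chi (G v) = G (chi v)" by (rule cm0[OF C(1), symmetric])
lemma chiK: "chi (K v) = K (chi v)" by (rule cm0[OF C(2), symmetric])
lemma chiD: "chi (D v) = D (chi v)" by (rule cm0[OF C(3), symmetric])
lemma chiP: "chi (P v) = P (chi v)" by (rule cm0[OF C(4), symmetric])
lemma chiH: "chi (H v) = H (chi v)" by (rule cm0[OF C(5), symmetric])
lemma chiM: "chi (M v) = M (chi v)" by (rule cm0[OF C(6), symmetric])
lemma Qchi: "Q (chi v) = - chi (Q v)" by (rule acm0[OF C(7)])
lemma Schi: "S (chi v) = - chi (S v)" by (rule acm0[OF C(8)])
lemma Xchi: "X (chi v) = - chi (X v)" by (rule acm0[OF C(9)])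
lemma chichi: "chi (chi v) = scale (m/2) v"
proof -
  have "scale m v = scale 2 (chi (chi v))" using chi unfolding odd_param_def apply - apply (erule conjE)+ apply (erule allE) apply assumption done
  then have "scale 2 (scale (m/2) v) = scale 2 (chi (chi v))" by (simp add: scale_scale)
  then show ?thesis by (rule twice_eq[symmetric])
qed

end

lemma pow_add: fixes B :: "'a::ab_group_add \<Rightarrow> 'a" assumes "\<And>x y. B (x + y) = B x + B y" shows "(B^^k) (x + y) = (B^^k) x + (B^^k) y"
  by (induct k) (simp_all add: assms)
lemma pow_scale: fixes B :: "'a \<Rightarrow> 'a" assumes "\<And>c x. B (s c x) = s c (B x)" shows "(B^^k) (s c x) = s c ((B^^k) x)"
  by (induct k) (simp_all add: assms)
lemma pow_comm: fixes A B :: "'a \<Rightarrow> 'a" assumes "\<And>x. A (B x) = B (A x)" shows "A ((B^^k) x) = (B^^k) (A x)"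
  by (induct k) (simp_all add: assms)


context SS begin

lemma pow_cm:
  assumes Badd: "\<And>x y. B (x + y) = B x + B y" and Bsc: "\<And>c x. B (scale c x) = scale c (B x)"
    and AB: "\<And>x. A (B x) = B (A x) + C x" and CB: "\<And>x. C (B x) = B (C x)"
  shows "A ((B^^k) x) = (B^^k) (A x) + scale (of_nat k) ((B^^(k-1)) (C x))"
proof (induct k)
  case 0 then show ?case by simp
next
  case (Suc k)
  have "A ((B^^Suc k) x) = B (A ((B^^k) x)) + C ((B^^k) x)" by (simp add: AB)
  also have "\<dots> = (B^^Suc k) (A x) + scale (of_nat k) (B ((B^^(k-1)) (C x))) + (B^^k) (C x)"
    by (simp add: Suc Badd Bsc pow_comm[where A=C and B=B, OF CB])
  also have "scale (of_nat k) (B ((B^^(k-1)) (C x))) = scale (of_nat k) ((B^^k) (C x))"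
    by (cases k) (simp_all add: funpow_swap1)
  finally show ?case by (simp add: scale_left_distrib add.assoc)
qed

lemmas Gadd = ladd(5) and Gsc = lscale(5) and Kadd = ladd(3) and Ksc = lscale(3)

lemma Gp_add[simp]: "(G^^k) (x + y) = (G^^k) x + (G^^k) y" by (rule pow_add[where B=G, OF Gadd])
lemma Gp_scale[simp]: "(G^^k) (scale c x) = scale c ((G^^k) x)" by (rule pow_scale[where B=G and s=scale, OF Gsc])
lemma Kp_add[simp]: "(K^^k) (x + y) = (K^^k) x + (K^^k) y" by (rule pow_add[where B=K, OF Kadd])
lemma Kp_scale[simp]: "(K^^k) (scale c x) = scale c ((K^^k) x)" by (rule pow_scale[where B=K and s=scale, OF Ksc])
lemma Gp_0[simp]: "(G^^k) 0 = 0" by (metis Gp_scale scale_zero_left)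
lemma Kp_0[simp]: "(K^^k) 0 = 0" by (metis Kp_scale scale_zero_left)
lemma Gp_neg[simp]: "(G^^k) (- x) = - (G^^k) x" by (metis Gp_add Gp_0 add_eq_0_iff)
lemma Kp_neg[simp]: "(K^^k) (- x) = - (K^^k) x" by (metis Kp_add Kp_0 add_eq_0_iff)
lemma Gp_diff[simp]: "(G^^k) (x - y) = (G^^k) x - (G^^k) y" by (simp only: diff_conv_add_uminus Gp_add Gp_neg)
lemma Kp_diff[simp]: "(K^^k) (x - y) = (K^^k) x - (K^^k) y" by (simp only: diff_conv_add_uminus Kp_add Kp_neg)

definition u :: "nat \<Rightarrow> bool \<Rightarrow> 'v" where "u l e = (K^^l) (if e then S v0 else v0)"
definition w :: "nat \<Rightarrow> nat \<Rightarrow> bool \<Rightarrow> 'v" where "w k l e = (G^^k) (u l e)"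

lemma G_w[simp]: "G (w k l e) = w (Suc k) l e" by (simp add: w_def)
lemma K_w[simp]: "K (w k l e) = w k (Suc l) e"
  by (simp add: w_def u_def pow_comm[of K G, OF KG])

lemma M_all_bv: "M (w k l e) = scale m (w k l e)"
  by (simp add: w_def u_def pow_comm[of M G, OF MG] pow_comm[of M K, OF MK] MS lwM)

end

context SS begin

lemma scale_add_eq: "a + b = c \<Longrightarrow> scale a x + scale b x = scale c x"
  by (simp add: scale_left_distrib[symmetric])

lemma Gpow_G: "(G^^k) (G y) = (G^^Suc k) y" by (simp add: funpow_swap1)
lemma Kpow_K: "(K^^k) (K y) = (K^^Suc k) y" by (simp add: funpow_swap1)

lemma Gpow_Gu: "(G^^k) (G (u l e)) = w (Suc k) l e" by (simp add: Gpow_G w_def)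
lemma wdef': "(G^^k) (u l e) = w k l e" by (simp add: w_def)
lemma chi_w: "chi (w k l e) = (G^^k) (chi (u l e))" by (simp add: w_def pow_comm[where A=chi and B=G, OF chiG])

lemma w0: "w 0 l e = u l e" by (simp add: w_def)

lemma M_u: "M (u l e) = scale m (u l e)" using M_all_bv[of 0 l e] by (simp add: w0)

lemma KpG: "(K^^l) (G x) = G ((K^^l) x)" by (rule pow_comm[where A=G and B=K, symmetric]) (rule KG[symmetric])

lemma P_u: "P (u l False) = scale (of_nat l) (G (u (l-1) False))"
proof -
  have "P (u l False) = (K^^l) (P v0) + scale (of_nat l) ((K^^(l-1)) (G v0))"
    unfolding u_def by (simp add: pow_cm[where A=P and B=K and C=G, OF Kadd Ksc PK KG[symmetric]])
  then show ?thesis by (simp add: lwP KpG u_def)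
qed

lemma P_uT: "P (u l True) = chi (u l False) + scale (of_nat l) (G (u (l-1) True))"
proof -
  have "P (u l True) = (K^^l) (P (S v0)) + scale (of_nat l) ((K^^(l-1)) (G (S v0)))"
    unfolding u_def by (simp add: pow_cm[where A=P and B=K and C=G, OF Kadd Ksc PK KG[symmetric]])
  moreover have "P (S v0) = chi v0" by (simp add: PS lwP lwX)
  ultimately show ?thesis by (simp add: KpG u_def pow_comm[where A=chi and B=K, OF chiK])
qed

lemma P_w0: "P (w k l e) = (G^^k) (P (u l e)) + scale (of_nat k * m) (w (k-1) l e)"
proof -
  have "P (w k l e) = (G^^k) (P (u l e)) + scale (of_nat k) ((G^^(k-1)) (M (u l e)))"
    unfolding w_def by (rule pow_cm[where A=P and B=G and C=M, OF Gadd Gsc PG MG])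
  then show ?thesis by (simp add: M_u w_def scale_scale)
qed

lemma P_wF: "P (w k l False) = scale (of_nat l) (w (Suc k) (l-1) False) + scale (of_nat k * m) (w (k-1) l False)"
  by (simp add: P_w0 P_u Gpow_Gu)

lemma P_wT: "P (w k l True) = chi (w k l False) + scale (of_nat l) (w (Suc k) (l-1) True) + scale (of_nat k * m) (w (k-1) l True)"
  by (simp add: P_w0 P_uT Gpow_Gu wdef' chi_w)

lemma QSv0: "Q (S v0) = scale (of_real d) v0"
  by (simp add: QS lwQ lwD scale_minus_left)

lemma Q_uF: "Q (u l False) = scale (of_nat l) (u (l-1) True)"
proof -
  have "Q (u l False) = (K^^l) (Q v0) + scale (of_nat l) ((K^^(l-1)) (S v0))"
    by (simp add: u_def pow_cm[where A=Q and B=K and C=S, OF Kadd Ksc QK SK])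
  then show ?thesis by (simp add: lwQ u_def)
qed

lemma Q_uT: "Q (u l True) = scale (of_real d - of_nat l) (u l False)"
proof -
  have "Q (u l True) = (K^^l) (Q (S v0)) + scale (of_nat l) ((K^^(l-1)) (S (S v0)))"
    unfolding u_def by (simp add: pow_cm[where A=Q and B=K and C=S, OF Kadd Ksc QK SK])
  also have "scale (of_nat l) ((K^^(l-1)) (S (S v0))) = - scale (of_nat l) ((K^^l) v0)"
    by (cases l) (simp_all add: SS Kpow_K scale_minus_right)
  finally show ?thesis by (simp add: QSv0 u_def scale_left_diff_distrib)
qed

lemma X_uF: "X (u l False) = chi (u l False)"
  by (simp add: u_def pow_comm[where A=X and B=K, OF XK] lwX pow_comm[where A=chi and B=K, OF chiK])

lemma X_uT: "X (u l True) = chi (u l True) - G (u l False)"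
  by (simp add: u_def pow_comm[where A=X and B=K, OF XK] XS lwX Schi KpG
      pow_comm[where A=chi and B=K, OF chiK])

lemma Q_w0: "Q (w k l e) = (G^^k) (Q (u l e)) + scale (of_nat k) ((G^^(k-1)) (X (u l e)))"
  unfolding w_def by (rule pow_cm[where A=Q and B=G and C=X, OF Gadd Gsc QG XG])

lemma Q_wF: "Q (w k l False) = scale (of_nat l) (w k (l-1) True) + scale (of_nat k) (chi (w (k-1) l False))"
  by (simp add: Q_w0 Q_uF X_uF wdef' chi_w)

lemma Q_wT: "Q (w k l True) = scale (of_real d - of_nat l) (w k l False) + scale (of_nat k) (chi (w (k-1) l True))
   - scale (of_nat k) (w k l False)"
proof -
  have "scale (of_nat k) ((G^^(k-1)) (G (u l False))) = scale (of_nat k) (w k l False)"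
    by (cases k) (simp_all add: Gpow_G w_def)
  then show ?thesis
    by (simp add: Q_w0 Q_uT X_uT wdef' chi_w scale_right_diff_distrib)
qed

lemma D_u: "D (u l e) = scale (2 * of_nat l + (if e then 1 else 0) - of_real d) (u l e)"
proof -
  have "D (u l e) = (K^^l) (D (if e then S v0 else v0)) + scale (of_nat l) ((K^^(l-1)) (scale 2 (K (if e then S v0 else v0))))"
    unfolding u_def by (rule pow_cm[where A=D and B=K, OF Kadd Ksc DK]) simp
  also have "scale (of_nat l) ((K^^(l-1)) (scale 2 (K (if e then S v0 else v0)))) = scale (2 * of_nat l) (u l e)"
    by (cases l) (simp_all add: Kpow_K u_def scale_scale mult.commute)
  also have "D (if e then S v0 else v0) = scale ((if e then 1 else 0) - of_real d) (if e then S v0 else v0)"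
    by (simp add: DS lwD scale_left_diff_distrib scale_minus_left)
  finally have "D (u l e) = scale ((if e then 1 else 0) - of_real d) (u l e) + scale (2 * of_nat l) (u l e)"
    by (simp add: u_def)
  also have "\<dots> = scale (2 * of_nat l + (if e then 1 else 0) - of_real d) (u l e)"
    by (rule scale_add_eq) simp
  finally show ?thesis .
qed

lemma D_w: "D (w k l e) = scale (of_nat k + 2 * of_nat l + (if e then 1 else 0) - of_real d) (w k l e)"
proof -
  have "D (w k l e) = (G^^k) (D (u l e)) + scale (of_nat k) ((G^^(k-1)) (G (u l e)))"
    unfolding w_def by (rule pow_cm[where A=D and B=G and C=G, OF Gadd Gsc DG]) simp
  also have "scale (of_nat k) ((G^^(k-1)) (G (u l e))) = scale (of_nat k) (w k l e)"
    by (cases k) (simp_all add: Gpow_G w_def)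
  finally have "D (w k l e) = scale (2 * of_nat l + (if e then 1 else 0) - of_real d) (w k l e) + scale (of_nat k) (w k l e)"
    by (simp add: D_u w_def)
  also have "\<dots> = scale (of_nat k + 2 * of_nat l + (if e then 1 else 0) - of_real d) (w k l e)"
    by (rule scale_add_eq) simp
  finally show ?thesis .
qed

end

context SS begin

definition bv :: "bool \<Rightarrow> nat \<Rightarrow> nat \<Rightarrow> bool \<Rightarrow> 'v" where
  "bv c k l e = (if c then chi (w k l e) else w k l e)"

lemma pbw_bv: "pbw_vec G K S chi v0 (c,k,l,e) = bv c k l e"
  by (simp add: pbw_vec_def bv_def w_def u_def)

definition BB where "BB = range (pbw_vec G K S chi v0)"

lemma indep: "\<not> dependent BB" using verma by (simp add: verma_basis_def BB_def)
lemma spanU: "span BB = UNIV" using verma by (simp add: verma_basis_def BB_def)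
lemma injpbw: "inj (pbw_vec G K S chi v0)" using verma by (simp add: verma_basis_def)
lemma inspan[simp]: "x \<in> span BB" by (simp add: spanU)

lemma bv_inj: "bv c k l e = bv c' k' l' e' \<longleftrightarrow> c = c' \<and> k = k' \<and> l = l' \<and> e = e'"
  using injpbw unfolding inj_def pbw_bv[symmetric] by blast

lemma bv_in: "bv c k l e \<in> BB" unfolding BB_def pbw_bv[symmetric] by simp

definition coef :: "'v \<Rightarrow> bool \<Rightarrow> nat \<Rightarrow> nat \<Rightarrow> bool \<Rightarrow> complex" where
  "coef x c k l e = representation BB x (bv c k l e)"

lemma coef_add[simp]: "coef (x + y) c k l e = coef x c k l e + coef y c k l e"
  unfolding coef_def by (simp add: representation_add[OF indep])
lemma coef_scale[simp]: "coef (scale a x) c k l e = a * coef x c k l e"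
  unfolding coef_def by (simp add: representation_scale[OF indep])
lemma coef_diff[simp]: "coef (x - y) c k l e = coef x c k l e - coef y c k l e"
  unfolding coef_def by (simp add: representation_diff[OF indep])
lemma coef_neg[simp]: "coef (- x) c k l e = - coef x c k l e"
  unfolding coef_def by (simp add: representation_neg[OF indep])
lemma coef_zero[simp]: "coef 0 c k l e = 0"
  unfolding coef_def by (simp add: representation_zero)
lemma coef_bv[simp]: "coef (bv c k l e) c' k' l' e' = (if c = c' \<and> k = k' \<and> l = l' \<and> e = e' then 1 else 0)"
  unfolding coef_def using bv_inj by (auto simp: representation_basis[OF indep bv_in])

lemma coef_eq0:
  assumes "\<And>c k l e. coef x c k l e = 0" shows "x = 0"
proof -
  have z: "representation BB x b = 0" for b
  proof (cases "b \<in> BB")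
    case True
    then obtain c k l e where "b = bv c k l e" unfolding BB_def by (auto simp: pbw_bv[symmetric])
    with assms show ?thesis by (simp add: coef_def)
  next
    case False
    then show ?thesis using representation_ne_zero by blast
  qed
  then have "{b. representation BB x b \<noteq> 0} = {}" by simp
  then show ?thesis using sum_nonzero_representation_eq[OF indep inspan, of x] by simp
qed

lemma coef_ext: "(\<And>c k l e. coef x c k l e = coef y c k l e) \<Longrightarrow> x = y"
  using coef_eq0[of "x - y"] by simp

lemma functional_eq:
  fixes L1 L2 :: "'v \<Rightarrow> complex"
  assumes a1: "\<And>x y. L1 (x + y) = L1 x + L1 y" and s1: "\<And>a x. L1 (scale a x) = a * L1 x"
    and a2: "\<And>x y. L2 (x + y) = L2 x + L2 y" and s2: "\<And>a x. L2 (scale a x) = a * L2 x"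
    and b: "\<And>c k l e. L1 (bv c k l e) = L2 (bv c k l e)"
  shows "L1 x = L2 x"
proof -
  have "x \<in> span BB" by simp
  then show ?thesis
  proof (induct rule: span_induct)
    case base
    show ?case unfolding subspace_def
    proof safe
      show "L1 0 = L2 0" using s1[of 0 0] s2[of 0 0] by simp
    qed (simp_all add: a1 a2 s1 s2)
  next
    case (step x)
    then show ?case unfolding BB_def using b by (auto simp: pbw_bv)
  qed
qed

end

context SS begin

lemma G_bv[simp]: "G (bv c k l e) = bv c (Suc k) l e" by (simp add: bv_def chiG[symmetric])
lemma K_bv[simp]: "K (bv c k l e) = bv c k (Suc l) e" by (simp add: bv_def chiK[symmetric])
lemma chi_bvF[simp]: "chi (bv False k l e) = bv True k l e" by (simp add: bv_def)
lemma chi_bvT[simp]: "chi (bv True k l e) = scale (m/2) (bv False k l e)" by (simp add: bv_def chichi)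
lemma D_bv[simp]: "D (bv c k l e) = scale (of_nat k + 2 * of_nat l + (if e then 1 else 0) - of_real d) (bv c k l e)"
  by (simp add: bv_def chiD[symmetric] D_w)

lemma P_bvF[simp]: "P (bv c k l False) = scale (of_nat l) (bv c (Suc k) (l-1) False) + scale (of_nat k * m) (bv c (k-1) l False)"
  by (cases c) (simp_all add: bv_def chiP[symmetric] P_wF)
lemma P_bvFT[simp]: "P (bv False k l True) = bv True k l False + scale (of_nat l) (bv False (Suc k) (l-1) True) + scale (of_nat k * m) (bv False (k-1) l True)"
  by (simp add: bv_def P_wT)
lemma P_bvTT[simp]: "P (bv True k l True) = scale (m/2) (bv False k l False) + scale (of_nat l) (bv True (Suc k) (l-1) True) + scale (of_nat k * m) (bv True (k-1) l True)"
  by (simp add: bv_def chiP[symmetric] P_wT chichi)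
lemma Q_bvFF[simp]: "Q (bv False k l False) = scale (of_nat l) (bv False k (l-1) True) + scale (of_nat k) (bv True (k-1) l False)"
  by (simp add: bv_def Q_wF)
lemma Q_bvTF[simp]: "Q (bv True k l False) = - scale (of_nat l) (bv True k (l-1) True) - scale (of_nat k * (m/2)) (bv False (k-1) l False)"
  by (simp add: bv_def Qchi Q_wF chichi scale_scale mult.commute)
lemma Q_bvFT[simp]: "Q (bv False k l True) = scale (of_real d - of_nat l) (bv False k l False) + scale (of_nat k) (bv True (k-1) l True) - scale (of_nat k) (bv False k l False)"
  by (simp add: bv_def Q_wT)
lemma Q_bvTT[simp]: "Q (bv True k l True) = - scale (of_real d - of_nat l) (bv True k l False) - scale (of_nat k * (m/2)) (bv False (k-1) l True) + scale (of_nat k) (bv True k l False)"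
  by (simp add: bv_def Qchi Q_wT chichi scale_scale mult.commute)

lemma cG0: "coef (G x) c 0 l e = 0"
proof (rule functional_eq[of "\<lambda>x. coef (G x) c 0 l e" "\<lambda>x. 0"])
  show "\<And>c' k' l' e'. (\<lambda>x. coef (G x) c 0 l e) (bv c' k' l' e') = (\<lambda>x. 0) (bv c' k' l' e')"
    by (case_tac c'; case_tac e') (auto simp: algebra_simps)
qed (auto simp: algebra_simps)

lemma cK0: "coef (K x) c 0 (Suc l) e = coef x c 0 l e"
proof (rule functional_eq[of "\<lambda>x. coef (K x) c 0 (Suc l) e" "\<lambda>x. coef x c 0 l e"])
  show "\<And>c' k' l' e'. (\<lambda>x. coef (K x) c 0 (Suc l) e) (bv c' k' l' e') = (\<lambda>x. coef x c 0 l e) (bv c' k' l' e')"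
    by (case_tac c'; case_tac e') (auto simp: algebra_simps)
qed (auto simp: algebra_simps)

lemma cchiT: "coef (chi x) True k l e = coef x False k l e"
proof (rule functional_eq[of "\<lambda>x. coef (chi x) True k l e" "\<lambda>x. coef x False k l e"])
  show "\<And>c' k' l' e'. (\<lambda>x. coef (chi x) True k l e) (bv c' k' l' e') = (\<lambda>x. coef x False k l e) (bv c' k' l' e')"
    by (case_tac c'; case_tac e') (auto simp: algebra_simps)
qed (auto simp: algebra_simps)

lemma cchiF: "coef (chi x) False k l e = m / 2 * coef x True k l e"
proof (rule functional_eq[of "\<lambda>x. coef (chi x) False k l e" "\<lambda>x. m / 2 * coef x True k l e"])
  show "\<And>c' k' l' e'. (\<lambda>x. coef (chi x) False k l e) (bv c' k' l' e') = (\<lambda>x. m / 2 * coef x True k l e) (bv c' k' l' e')"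
    by (case_tac c'; case_tac e') (auto simp: algebra_simps)
qed (auto simp: algebra_simps)

lemma cD: "coef (D x) c k l e = (of_nat k + 2 * of_nat l + (if e then 1 else 0) - of_real d) * coef x c k l e"
proof (rule functional_eq[of "\<lambda>x. coef (D x) c k l e" "\<lambda>x. (of_nat k + 2 * of_nat l + (if e then 1 else 0) - of_real d) * coef x c k l e"])
  show "\<And>c' k' l' e'. (\<lambda>x. coef (D x) c k l e) (bv c' k' l' e') = (\<lambda>x. (of_nat k + 2 * of_nat l + (if e then 1 else 0) - of_real d) * coef x c k l e) (bv c' k' l' e')"
    by (case_tac c'; case_tac e') (auto simp: algebra_simps)
qed (auto simp: algebra_simps)

lemma cP_TF: "coef (P x) True k l False = m * (of_nat k + 1) * coef x True (Suc k) l False + (if k = 0 then 0 else (of_nat l + 1) * coef x True (k-1) (Suc l) False) + coef x False k l True"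
proof (rule functional_eq[of "\<lambda>x. coef (P x) True k l False" "\<lambda>x. m * (of_nat k + 1) * coef x True (Suc k) l False + (if k = 0 then 0 else (of_nat l + 1) * coef x True (k-1) (Suc l) False) + coef x False k l True"])
  show "\<And>c' k' l' e'. (\<lambda>x. coef (P x) True k l False) (bv c' k' l' e') = (\<lambda>x. m * (of_nat k + 1) * coef x True (Suc k) l False + (if k = 0 then 0 else (of_nat l + 1) * coef x True (k-1) (Suc l) False) + coef x False k l True) (bv c' k' l' e')"
    by (case_tac c'; case_tac e') (auto simp: algebra_simps)
qed (auto simp: algebra_simps)

lemma cP_FT: "coef (P x) False k l True = m * (of_nat k + 1) * coef x False (Suc k) l True + (if k = 0 then 0 else (of_nat l + 1) * coef x False (k-1) (Suc l) True)"
proof (rule functional_eq[of "\<lambda>x. coef (P x) False k l True" "\<lambda>x. m * (of_nat k + 1) * coef x False (Suc k) l True + (if k = 0 then 0 else (of_nat l + 1) * coef x False (k-1) (Suc l) True)"])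
  show "\<And>c' k' l' e'. (\<lambda>x. coef (P x) False k l True) (bv c' k' l' e') = (\<lambda>x. m * (of_nat k + 1) * coef x False (Suc k) l True + (if k = 0 then 0 else (of_nat l + 1) * coef x False (k-1) (Suc l) True)) (bv c' k' l' e')"
    by (case_tac c'; case_tac e') (auto simp: algebra_simps)
qed (auto simp: algebra_simps)

lemma cQ_FF: "coef (Q x) False k l False = - (m / 2) * (of_nat k + 1) * coef x True (Suc k) l False + (of_real d - of_nat k - of_nat l) * coef x False k l True"
proof (rule functional_eq[of "\<lambda>x. coef (Q x) False k l False" "\<lambda>x. - (m / 2) * (of_nat k + 1) * coef x True (Suc k) l False + (of_real d - of_nat k - of_nat l) * coef x False k l True"])
  show "\<And>c' k' l' e'. (\<lambda>x. coef (Q x) False k l False) (bv c' k' l' e') = (\<lambda>x. - (m / 2) * (of_nat k + 1) * coef x True (Suc k) l False + (of_real d - of_nat k - of_nat l) * coef x False k l True) (bv c' k' l' e')"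
    by (case_tac c'; case_tac e') (auto simp: algebra_simps)
qed (auto simp: algebra_simps)

lemma cQ_TT: "coef (Q x) True k l True = (of_nat k + 1) * coef x False (Suc k) l True - (of_nat l + 1) * coef x True k (Suc l) False"
proof (rule functional_eq[of "\<lambda>x. coef (Q x) True k l True" "\<lambda>x. (of_nat k + 1) * coef x False (Suc k) l True - (of_nat l + 1) * coef x True k (Suc l) False"])
  show "\<And>c' k' l' e'. (\<lambda>x. coef (Q x) True k l True) (bv c' k' l' e') = (\<lambda>x. (of_nat k + 1) * coef x False (Suc k) l True - (of_nat l + 1) * coef x True k (Suc l) False) (bv c' k' l' e')"
    by (case_tac c'; case_tac e') (auto simp: algebra_simps)
qed (auto simp: algebra_simps)

end

locale sysI =
  fixes A B :: "nat \<Rightarrow> nat \<Rightarrow> complex" and m :: complex and d :: real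
  assumes mnz: "m \<noteq> 0"
  and P2: "\<And>k l. m * (of_nat k + 1) * A (Suc k) l + (if k = 0 then 0 else (of_nat l + 1) * A (k-1) (Suc l)) + B k l = 0"
  and P3: "\<And>k l. m * (of_nat k + 1) * B (Suc k) l + (if k = 0 then 0 else (of_nat l + 1) * B (k-1) (Suc l)) = 0"
  and Q1: "\<And>k l. - (m / 2) * (of_nat k + 1) * A (Suc k) l + (of_real d - of_nat k - of_nat l) * B k l = 0"
  and Q4: "\<And>k l. (of_nat k + 1) * B (Suc k) l - (of_nat l + 1) * A k (Suc l) = 0"
begin

lemma nzc: "(of_nat j + 1 :: complex) \<noteq> 0"
proof -
  have "(of_nat (Suc j) :: complex) \<noteq> 0" by (rule of_nat_neq_0)
  then show ?thesis by (simp add: add.commute)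
qed

lemma R1e: "(2 * of_real d + 1 - of_nat k - 2 * of_nat l) * B k l = 0"
proof (cases k)
  case 0
  have "(2 * of_real d + 1 - of_nat k - 2 * of_nat l) * B k l
     = (m * (of_nat 0 + 1) * A (Suc 0) l + (if (0::nat) = 0 then 0 else (of_nat l + 1) * A (0-1) (Suc l)) + B 0 l)
       + 2 * (- (m / 2) * (of_nat 0 + 1) * A (Suc 0) l + (of_real d - of_nat 0 - of_nat l) * B 0 l)"
    using 0 by (simp add: algebra_simps)
  also have "\<dots> = 0" unfolding P2[of 0 l] Q1[of 0 l] by simp
  finally show ?thesis .
next
  case (Suc j)
  have "(2 * of_real d + 1 - of_nat k - 2 * of_nat l) * B k l
     = (m * (of_nat (Suc j) + 1) * A (Suc (Suc j)) l + (if Suc j = 0 then 0 else (of_nat l + 1) * A (Suc j - 1) (Suc l)) + B (Suc j) l)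
       + 2 * (- (m / 2) * (of_nat (Suc j) + 1) * A (Suc (Suc j)) l + (of_real d - of_nat (Suc j) - of_nat l) * B (Suc j) l)
       + ((of_nat j + 1) * B (Suc j) l - (of_nat l + 1) * A j (Suc l))"
    using Suc by (simp add: algebra_simps)
  also have "\<dots> = 0" unfolding P2[of "Suc j" l] Q1[of "Suc j" l] Q4[of j l] by simp
  finally show ?thesis .
qed

lemma R1: "B k l \<noteq> 0 \<Longrightarrow> 2 * d + 1 = real k + 2 * real l"
proof -
  assume "B k l \<noteq> 0"
  then have "2 * complex_of_real d + 1 - of_nat k - 2 * of_nat l = 0" using R1e[of k l] by simp
  then have "complex_of_real (2 * d + 1) = complex_of_real (real k + 2 * real l)" by (simp add: algebra_simps)
  then show ?thesis using of_real_eq_iff by blast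
qed

lemma R2: assumes "\<And>l. B 0 l = 0" shows "B k l = 0"
proof -
  have "\<forall>l. B k l = 0 \<and> B (Suc k) l = 0"
  proof (induct k)
    case 0
    show ?case
    proof
      fix l
      have "m * B 1 l = 0" using P3[of 0 l] by simp
      then show "B 0 l = 0 \<and> B (Suc 0) l = 0" using mnz assms by simp
    qed
  next
    case (Suc k)
    show ?case
    proof
      fix l
      have "m * (of_nat (Suc k) + 1) * B (Suc (Suc k)) l + (of_nat l + 1) * B k (Suc l) = 0"
        using P3[of "Suc k" l] by simp
      then have "m * (of_nat (Suc k) + 1) * B (Suc (Suc k)) l = 0" using Suc by simp
      moreover have "(of_nat (Suc k) + 1 :: complex) \<noteq> 0" by (rule nzc)
      ultimately show "B (Suc k) l = 0 \<and> B (Suc (Suc k)) l = 0" using mnz Suc by simp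
    qed
  qed
  then show ?thesis by simp
qed

lemma R3: assumes "\<And>k l. B k l = 0" and "k \<noteq> 0 \<or> l \<noteq> 0" shows "A k l = 0"
proof (cases k)
  case 0
  then obtain j where l: "l = Suc j" using assms(2) by (cases l) auto
  have "(of_nat j + 1) * A 0 (Suc j) = 0" using Q4[of 0 j] assms(1) by simp
  moreover have "(of_nat j + 1 :: complex) \<noteq> 0" by (rule nzc)
  ultimately show ?thesis using 0 l by simp
next
  case (Suc j)
  have "(m / 2) * (of_nat j + 1) * A (Suc j) l = 0" using Q1[of j l] assms(1) by simp
  moreover have "(of_nat j + 1 :: complex) \<noteq> 0" by (rule nzc)
  ultimately show ?thesis using Suc mnz by simp
qed

end

context SS begin

lemma v0_bv: "bv False 0 0 False = v0" by (simp add: bv_def w_def u_def)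
lemma chiv0_bv: "chi v0 = bv True 0 0 False" by (simp add: bv_def w_def u_def)
lemma Sv0_bv: "S v0 = bv False 0 0 True" by (simp add: bv_def w_def u_def)

lemma cM: "coef (M x) c k l e = m * coef x c k l e"
proof (rule functional_eq[of "\<lambda>x. coef (M x) c k l e" "\<lambda>x. m * coef x c k l e"])
  show "\<And>c' k' l' e'. coef (M (bv c' k' l' e')) c k l e = m * coef (bv c' k' l' e') c k l e"
    by (simp add: bv_def chiM[symmetric] M_all_bv)
qed (simp_all add: algebra_simps)

lemma M_all: "M x = scale m x"
  by (rule coef_ext) (simp add: cM)

definition Z :: "'v \<Rightarrow> 'v" where "Z = (\<lambda>v. G (G v) - scale (2 * m) (K v))"
definition T0 :: 'v where "T0 = G v0 - scale 2 (chi (S v0))"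
definition vs :: "nat \<Rightarrow> 'v" where "vs n = (Z^^n) T0"

lemma Zadd: "Z (x + y) = Z x + Z y" by (simp add: Z_def scale_right_distrib algebra_simps)
lemma Zsc: "Z (scale c x) = scale c (Z x)"
  by (simp add: Z_def scale_right_diff_distrib scale_scale mult.commute)
lemma Zp_0: "(Z^^n) 0 = 0" by (induct n) (simp_all add: Z_def)
lemma chiZ: "chi (Z x) = Z (chi x)" by (simp add: Z_def chiG chiK)

lemma PZ: "P (Z x) = Z (P x)"
proof -
  have "P (Z x) = G (G (P x)) + scale m (G x) + scale m (G x) - (scale (2*m) (K (P x)) + scale (2*m) (G x))"
    by (simp add: Z_def PG PK M_all scale_right_distrib)
  also have "\<dots> = Z (P x)"
    by (simp add: Z_def algebra_simps scale_right_distrib scale_left_distrib[symmetric])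
  finally show ?thesis .
qed

definition R :: "'v \<Rightarrow> 'v" where "R x = scale 2 (G (X x)) - scale (2 * m) (S x)"

lemma QZ: "Q (Z x) = Z (Q x) + R x"
proof -
  have "Q (Z x) = G (G (Q x)) + G (X x) + G (X x) - (scale (2*m) (K (Q x)) + scale (2*m) (S x))"
    by (simp add: Z_def QG QK XG scale_right_distrib)
  also have "\<dots> = Z (Q x) + R x"
    by (simp add: Z_def R_def scale2 algebra_simps scale_right_distrib)
  finally show ?thesis .
qed

lemma RZ: "R (Z x) = Z (R x)"
  by (simp add: R_def Z_def XG XK SG SK KG scale_right_diff_distrib scale_scale mult.commute)

lemma DZ: "D (Z x) = Z (D x) + scale 2 (Z x)"
proof -
  have "D (Z x) = G (G (D x)) + G (G x) + G (G x) - (scale (2*m) (K (D x)) + scale (2*m) (scale 2 (K x)))"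
    by (simp add: Z_def DG DK scale_right_distrib)
  also have "\<dots> = Z (D x) + scale 2 (Z x)"
    by (simp add: Z_def scale2 scale_right_diff_distrib scale_right_distrib scale_scale algebra_simps mult.commute)
  finally show ?thesis .
qed

lemma PT0: "P T0 = 0"
  by (simp add: T0_def PG lwP lwM chiP[symmetric] PS lwX chichi scale_scale)

lemma QT0: "Q T0 = scale (1 + 2 * of_real d) (chi v0)"
  by (simp add: T0_def QG lwQ lwX Qchi QSv0 scale_left_distrib scale_scale)

lemma XT0: "X T0 = scale m (S v0) - chi (G v0)"
proof -
  have "X T0 = G (chi v0) + scale 2 (chi (chi (S v0))) - scale 2 (chi (G v0))"
    by (simp add: T0_def XG lwX Xchi XS Schi scale_right_diff_distrib scale_right_distrib)
  also have "\<dots> = scale m (S v0) - chi (G v0)"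
    by (simp add: chichi scale_scale chiG scale2[symmetric])
  finally show ?thesis .
qed

lemma ST0: "S T0 = G (S v0) - scale 2 (chi (K v0))"
  by (simp add: T0_def SG Schi SS)

lemma RT0: "R T0 = scale (-2) (chi (Z v0))"
proof -
  have "R T0 = scale 2 (scale m (G (S v0))) - scale 2 (chi (G (G v0))) - scale (2*m) (G (S v0)) + scale (2*m) (scale 2 (chi (K v0)))"
    by (simp add: R_def XT0 ST0 chiG scale_right_diff_distrib)
  also have "\<dots> = scale (-2) (chi (Z v0))"
    by (simp add: Z_def scale_scale scale_right_diff_distrib chiG chiK scale_minus_left mult.commute)
  finally show ?thesis .
qed

lemma DT0: "D T0 = scale (1 - of_real d) T0"
  by (simp add: T0_def DG lwD chiD[symmetric] DS scale_right_diff_distrib scale_left_diff_distrib scale_minus_left algebra_simps)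


lemma Zp_add: "(Z^^n) (x + y) = (Z^^n) x + (Z^^n) y" by (rule pow_add[where B=Z, OF Zadd])
lemma Zp_scale: "(Z^^n) (scale c x) = scale c ((Z^^n) x)" by (rule pow_scale[where B=Z and s=scale, OF Zsc])
lemma Zp_neg: "(Z^^n) (- x) = - (Z^^n) x" by (metis Zp_add Zp_0 add_eq_0_iff)
lemma chiZp: "chi ((Z^^n) x) = (Z^^n) (chi x)" by (rule pow_comm[where A=chi and B=Z, OF chiZ])

lemma P_vs: "P (vs n) = 0"
  by (simp add: vs_def pow_comm[where A=P and B=Z, OF PZ] PT0 Zp_0)

lemma Q_vs: "Q (vs n) = scale (1 + 2 * of_real d - 2 * of_nat n) (chi ((Z^^n) v0))"
proof -
  have "Q (vs n) = (Z^^n) (Q T0) + scale (of_nat n) ((Z^^(n-1)) (R T0))"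
    unfolding vs_def by (rule pow_cm[where A=Q and B=Z and C=R, OF Zadd Zsc QZ RZ])
  also have "(Z^^n) (Q T0) = scale (1 + 2 * of_real d) (chi ((Z^^n) v0))"
    by (simp add: QT0 Zp_scale chiZp)
  also have "scale (of_nat n) ((Z^^(n-1)) (R T0)) = scale (- 2 * of_nat n) (chi ((Z^^n) v0))"
    by (cases n) (simp_all add: RT0 Zp_scale Zp_neg chiZp chiZ scale_scale funpow_swap1 scale_minus_right algebra_simps)
  finally have "Q (vs n) = scale (1 + 2 * of_real d) (chi ((Z^^n) v0)) + scale (- 2 * of_nat n) (chi ((Z^^n) v0))" .
  also have "\<dots> = scale (1 + 2 * of_real d - 2 * of_nat n) (chi ((Z^^n) v0))"
    by (rule scale_add_eq) simp
  finally show ?thesis .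
qed

lemma Q_vs0: "d + 1/2 = real n \<Longrightarrow> Q (vs n) = 0"
proof -
  assume a: "d + 1/2 = real n"
  have "1 + 2 * complex_of_real d - 2 * of_nat n = complex_of_real (1 + 2 * d - 2 * real n)" by simp
  also have "1 + 2 * d - 2 * real n = 0" using a by simp
  finally show ?thesis by (simp add: Q_vs)
qed

lemma D_Zp: "D y = scale c y \<Longrightarrow> D ((Z^^n) y) = scale (c + 2 * of_nat n) ((Z^^n) y)"
proof (induct n)
  case 0 then show ?case by simp
next
  case (Suc n)
  have "D ((Z^^Suc n) y) = Z (scale (c + 2 * of_nat n) ((Z^^n) y)) + scale 2 (Z ((Z^^n) y))"
    by (simp add: DZ Suc)
  also have "\<dots> = scale (c + 2 * of_nat n) (Z ((Z^^n) y)) + scale 2 (Z ((Z^^n) y))"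
    by (simp add: Zsc)
  also have "\<dots> = scale (c + 2 * of_nat (Suc n)) (Z ((Z^^n) y))"
    by (rule scale_add_eq) simp
  finally show ?case by simp
qed

lemma D_vs: "D (vs n) = scale (1 - of_real d + 2 * of_nat n) (vs n)"
  unfolding vs_def by (rule D_Zp) (simp add: DT0)

lemma cZ0: "coef (Z x) c 0 (Suc l) e = - (2 * m) * coef x c 0 l e"
  by (simp add: Z_def cG0 cK0)

lemma cT0: "coef T0 True 0 0 True = -2" "coef T0 False 0 0 True = 0"
  by (simp_all add: T0_def cG0 Sv0_bv)

lemma cvs_gen: "coef ((Z^^j) T0) c 0 j True = (- (2 * m)) ^ j * coef T0 c 0 0 True"
  by (induct j) (simp_all add: cZ0)

lemma cvs: "coef (vs n) True 0 n True = -2 * (- (2 * m)) ^ n" "coef (vs n) False 0 n True = 0"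
  by (simp_all add: vs_def cvs_gen cT0)

lemma cvs_nz: "coef (vs n) True 0 n True \<noteq> 0" using mnz by (simp add: cvs)

end

context SS begin

lemma sys_of:
  assumes "P x = 0" "Q x = 0"
  shows "sysI (\<lambda>k l. coef x True k l False) (\<lambda>k l. coef x False k l True) m d"
proof unfold_locales
  show "m \<noteq> 0" by (rule mnz)
  fix k l
  show "m * (of_nat k + 1) * coef x True (Suc k) l False + (if k = 0 then 0 else (of_nat l + 1) * coef x True (k-1) (Suc l) False) + coef x False k l True = 0"
    using cP_TF[of x k l] assms by (simp only: coef_zero)
  show "m * (of_nat k + 1) * coef x False (Suc k) l True + (if k = 0 then 0 else (of_nat l + 1) * coef x False (k-1) (Suc l) True) = 0"
    using cP_FT[of x k l] assms by (simp only: coef_zero)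
  show "- (m / 2) * (of_nat k + 1) * coef x True (Suc k) l False + (of_real d - of_nat k - of_nat l) * coef x False k l True = 0"
    using cQ_FF[of x k l] assms by (simp only: coef_zero)
  show "(of_nat k + 1) * coef x False (Suc k) l True - (of_nat l + 1) * coef x True k (Suc l) False = 0"
    using cQ_TT[of x k l] assms by (simp only: coef_zero)
qed

lemma coef_v0: "coef v0 c k l e = (if \<not> c \<and> k = 0 \<and> l = 0 \<and> \<not> e then 1 else 0)"
proof -
  have "coef v0 c k l e = coef (bv False 0 0 False) c k l e" by (simp only: v0_bv)
  then show ?thesis by auto
qed
lemma coef_chiv0: "coef (chi v0) c k l e = (if c \<and> k = 0 \<and> l = 0 \<and> \<not> e then 1 else 0)"
  by (simp add: chiv0_bv)

lemma coef_smult: "coef (smult_chi scale chi a b v0) c k l e =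
   (if k = 0 \<and> l = 0 \<and> \<not> e then (if c then b else a) else 0)"
  by (simp add: smult_chi_def coef_v0 coef_chiv0)

lemma level0:
  assumes "\<And>c k l e. k \<noteq> 0 \<or> l \<noteq> 0 \<or> e \<Longrightarrow> coef x c k l e = 0"
  shows "x = smult_chi scale chi (coef x False 0 0 False) (coef x True 0 0 False) v0"
proof (rule coef_ext)
  fix c k l e
  show "coef x c k l e = coef (smult_chi scale chi (coef x False 0 0 False) (coef x True 0 0 False) v0) c k l e"
    using assms[of k l e c] by (cases c) (auto simp: coef_smult)
qed

lemma K0:
  assumes Px: "P x = 0" and Qx: "Q x = 0"
    and h: "\<And>l. 2 * d + 1 = 2 * real l \<Longrightarrow> coef x False 0 l True = 0 \<and> coef x True 0 l True = 0"
  shows "\<exists>a b. x = smult_chi scale chi a b v0"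
proof -
  interpret s1: sysI "\<lambda>k l. coef x True k l False" "\<lambda>k l. coef x False k l True" m d
    by (rule sys_of[OF Px Qx])
  have Pc: "P (chi x) = 0" by (simp add: chiP[symmetric] Px)
  have Qc: "Q (chi x) = 0" by (simp add: Qchi Qx)
  interpret s2: sysI "\<lambda>k l. coef (chi x) True k l False" "\<lambda>k l. coef (chi x) False k l True" m d
    by (rule sys_of[OF Pc Qc])
  have B10: "coef x False 0 l True = 0" for l
  proof (rule ccontr)
    assume "coef x False 0 l True \<noteq> 0"
    then have "2 * d + 1 = real 0 + 2 * real l" by (rule s1.R1)
    then show False using h[of l] \<open>coef x False 0 l True \<noteq> 0\<close> by simp
  qed
  have B1: "coef x False k l True = 0" for k l by (rule s1.R2) (rule B10)
  have B20: "coef (chi x) False 0 l True = 0" for l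
  proof (rule ccontr)
    assume a: "coef (chi x) False 0 l True \<noteq> 0"
    then have "2 * d + 1 = real 0 + 2 * real l" by (rule s2.R1)
    then have "coef x True 0 l True = 0" using h[of l] by simp
    then show False using a by (simp add: cchiF)
  qed
  have B2': "coef (chi x) False k l True = 0" for k l by (rule s2.R2) (rule B20)
  have B2: "coef x True k l True = 0" for k l using B2'[of k l] mnz by (simp add: cchiF)
  have A1: "coef x True k l False = 0" if "k \<noteq> 0 \<or> l \<noteq> 0" for k l
    by (rule s1.R3) (rule B1, rule that)
  have A2: "coef x False k l False = 0" if "k \<noteq> 0 \<or> l \<noteq> 0" for k l
    using s2.R3[OF B2' that] by (simp add: cchiT)
  have "x = smult_chi scale chi (coef x False 0 0 False) (coef x True 0 0 False) v0"
  proof (rule level0)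
    fix c e :: bool and k l :: nat assume "k \<noteq> 0 \<or> l \<noteq> 0 \<or> e"
    then show "coef x c k l e = 0" using A1 A2 B1 B2 by (cases c; cases e) auto
  qed
  then show ?thesis by blast
qed

end

context SS begin

lemma L_nos:
  assumes nn: "\<not> (\<exists>n::nat. d + 1/2 = real n)"
  shows "\<not> singular_vec scale H D P Q chi v0 x"
proof
  assume sx: "singular_vec scale H D P Q chi v0 x"
  then have Px: "P x = 0" and Qx: "Q x = 0" and nx: "\<nexists>a b. x = smult_chi scale chi a b v0"
    by (auto simp: singular_vec_def)
  have "\<exists>a b. x = smult_chi scale chi a b v0"
  proof (rule K0[OF Px Qx])
    fix l assume "2 * d + 1 = 2 * real l"
    then have "d + 1/2 = real l" by simp
    then show "coef x False 0 l True = 0 \<and> coef x True 0 l True = 0" using nn by blast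
  qed
  then show False using nx by blast
qed

lemma L_sing:
  assumes n: "d + 1/2 = real n"
  shows "singular_vec scale H D P Q chi v0 (vs n)"
  unfolding singular_vec_def
proof (intro conjI)
  show "\<exists>c. D (vs n) = scale c (vs n)" using D_vs by blast
  show "\<nexists>a b. vs n = smult_chi scale chi a b v0"
  proof
    assume "\<exists>a b. vs n = smult_chi scale chi a b v0"
    then obtain a b where "vs n = smult_chi scale chi a b v0" by blast
    then have "coef (vs n) True 0 n True = coef (smult_chi scale chi a b v0) True 0 n True" by simp
    then show False using cvs_nz by (simp add: coef_smult)
  qed
  show "Q (vs n) = 0" by (rule Q_vs0[OF n])
  show "P (vs n) = 0" by (rule P_vs)
  show "H (vs n) = 0" by (simp add: HQQ Q_vs0[OF n])
qed

lemma vs_lev0: "coef (vs n) c 0 0 False = 0"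
proof -
  have "coef (D (vs n)) c 0 0 False = (1 - of_real d + 2 * of_nat n) * coef (vs n) c 0 0 False"
    by (simp add: D_vs)
  moreover have "coef (D (vs n)) c 0 0 False = (- of_real d) * coef (vs n) c 0 0 False"
    by (simp add: cD)
  ultimately have "(1 + 2 * of_nat n) * coef (vs n) c 0 0 False = 0"
    by (simp add: algebra_simps)
  moreover have "(1 + 2 * of_nat n :: complex) \<noteq> 0"
  proof -
    have "(of_nat (Suc (2 * n)) :: complex) \<noteq> 0" by (rule of_nat_neq_0)
    then show ?thesis by simp
  qed
  ultimately show ?thesis by simp
qed

lemma L_uniq:
  assumes n: "d + 1/2 = real n" and sw: "singular_vec scale H D P Q chi v0 x"
  shows "\<exists>a b. (a, b) \<noteq> (0, 0) \<and> x = smult_chi scale chi a b (vs n)"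
proof -
  from sw obtain c where Dx: "D x = scale c x" and nx: "\<nexists>a b. x = smult_chi scale chi a b v0"
    and Px: "P x = 0" and Qx: "Q x = 0" by (auto simp: singular_vec_def)
  define \<alpha> where "\<alpha> = coef x True 0 n True / coef (vs n) True 0 n True"
  define \<beta> where "\<beta> = coef x False 0 n True / coef (chi (vs n)) False 0 n True"
  have nz1: "coef (vs n) True 0 n True \<noteq> 0" by (rule cvs_nz)
  have nz2: "coef (chi (vs n)) False 0 n True \<noteq> 0" using nz1 mnz by (simp add: cchiF)
  define y where "y = x - scale \<alpha> (vs n) - scale \<beta> (chi (vs n))"
  have Py: "P y = 0" by (simp add: y_def Px P_vs chiP[symmetric])
  have Qy: "Q y = 0" by (simp add: y_def Qx Q_vs0[OF n] Qchi)
  have "\<exists>a b. y = smult_chi scale chi a b v0"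
  proof (rule K0[OF Py Qy])
    fix l assume "2 * d + 1 = 2 * real l"
    with n have "l = n" by simp
    show "coef y False 0 l True = 0 \<and> coef y True 0 l True = 0"
      using nz1 nz2 \<open>l = n\<close> by (simp add: y_def \<alpha>_def \<beta>_def cchiT cvs(2))
  qed
  then obtain a b where yab: "y = smult_chi scale chi a b v0" by blast
  have xeq: "x = smult_chi scale chi a b v0 + (scale \<alpha> (vs n) + scale \<beta> (chi (vs n)))"
    using yab by (simp add: y_def algebra_simps)
  have ca: "coef x False 0 0 False = a" and cb: "coef x True 0 0 False = b"
    by (simp_all add: xeq coef_smult vs_lev0 cchiT cchiF)
  have ab0: "a = 0 \<and> b = 0"
  proof (rule ccontr)
    assume "\<not> (a = 0 \<and> b = 0)"
    then obtain c0 where c0: "coef x c0 0 0 False \<noteq> 0" using ca cb by metis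
    have "coef (D x) c0 0 0 False = c * coef x c0 0 0 False" by (simp add: Dx)
    moreover have "coef (D x) c0 0 0 False = (- of_real d) * coef x c0 0 0 False" by (simp add: cD)
    ultimately have "c * coef x c0 0 0 False = - (of_real d * coef x c0 0 0 False)" by simp
    then have "(c + of_real d) * coef x c0 0 0 False = 0" by (simp add: distrib_right)
    then have "c + of_real d = 0" using c0 by simp
    then have cd: "c = - of_real d" by (simp add: eq_neg_iff_add_eq_0)
    have "x = smult_chi scale chi (coef x False 0 0 False) (coef x True 0 0 False) v0"
    proof (rule level0)
      fix c' e :: bool and k l :: nat assume kle: "k \<noteq> 0 \<or> l \<noteq> 0 \<or> e"
      have "coef (D x) c' k l e = c * coef x c' k l e" by (simp add: Dx)
      moreover have "coef (D x) c' k l e = (of_nat k + 2 * of_nat l + (if e then 1 else 0) - of_real d) * coef x c' k l e"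
        by (simp add: cD)
      ultimately have "(of_nat k + 2 * of_nat l + (if e then 1 else 0)) * coef x c' k l e = 0"
        using cd by (simp add: algebra_simps)
      moreover have "(of_nat k + 2 * of_nat l + (if e then 1 else 0) :: complex) \<noteq> 0"
      proof -
        have "(of_nat (k + 2 * l + (if e then 1 else 0)) :: complex) \<noteq> 0"
          using kle by (simp only: of_nat_eq_0_iff) auto
        then show ?thesis by (cases e) (simp_all add: add.commute)
      qed
      ultimately show "coef x c' k l e = 0" by simp
    qed
    then show False using nx by blast
  qed
  then have xeq2: "x = smult_chi scale chi \<alpha> \<beta> (vs n)"
    using xeq by (simp add: smult_chi_def)
  moreover have "(\<alpha>, \<beta>) \<noteq> (0, 0)"
  proof
    assume "(\<alpha>, \<beta>) = (0, 0)"
    then have "x = smult_chi scale chi 0 0 v0" using xeq2 by (simp add: smult_chi_def)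
    then show False using nx by blast
  qed
  ultimately show ?thesis by blast
qed

lemma vs_eq: "vs n = ((\<lambda>v. G (G v) - scale (2 * m) (K v)) ^^ n) (G v0 - scale 2 (chi (S v0)))"
  by (simp add: vs_def Z_def T0_def)

lemma main:
  "((\<exists>vs. unique_singular scale H D P Q chi v0 vs) \<longleftrightarrow> (\<exists>n::nat. d + 1/2 = real n)) \<and>
   (\<forall>n::nat. d + 1/2 = real n \<longrightarrow>
     unique_singular scale H D P Q chi v0
       (((\<lambda>v. G (G v) - scale (2 * m) (K v)) ^^ n) (G v0 - scale 2 (chi (S v0)))))"
proof -
  have B: "unique_singular scale H D P Q chi v0 (((\<lambda>v. G (G v) - scale (2 * m) (K v)) ^^ n) (G v0 - scale 2 (chi (S v0))))"
    if n: "d + 1/2 = real n" for n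
    unfolding vs_eq[symmetric] unique_singular_def using L_sing[OF n] L_uniq[OF n] by blast
  have A: "(\<exists>vs. unique_singular scale H D P Q chi v0 vs) \<longleftrightarrow> (\<exists>n::nat. d + 1/2 = real n)"
  proof
    assume "\<exists>vs. unique_singular scale H D P Q chi v0 vs"
    then obtain v where "singular_vec scale H D P Q chi v0 v" by (auto simp: unique_singular_def)
    then show "\<exists>n::nat. d + 1/2 = real n" using L_nos by blast
  next
    assume "\<exists>n::nat. d + 1/2 = real n"
    then show "\<exists>vs. unique_singular scale H D P Q chi v0 vs" using B by blast
  qed
  show ?thesis using A B by blast
qed

end

theorem proposition1:
  fixes scale :: "complex \<Rightarrow> 'v::ab_group_add \<Rightarrow> 'v"
    and H D K P G M Q S X chi :: "'v \<Rightarrow> 'v"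
    and v0 :: 'v and d :: real and m :: complex
  assumes rep: "s11_rep scale H D K P G M Q S X"
    and chi: "odd_param scale H D K P G M Q S X chi m"
    and m: "m \<noteq> 0"
    and lw: "Q v0 = 0" "P v0 = 0" "D v0 = scale (- complex_of_real d) v0"
            "M v0 = scale m v0" "X v0 = chi v0"
    and verma: "verma_basis scale G K S chi v0"
  shows "((\<exists>vs. unique_singular scale H D P Q chi v0 vs) \<longleftrightarrow> (\<exists>n::nat. d + 1/2 = real n)) \<and>
         (\<forall>n::nat. d + 1/2 = real n \<longrightarrow>
           unique_singular scale H D P Q chi v0
             (((\<lambda>v. G (G v) - scale (2 * m) (K v)) ^^ n) (G v0 - scale 2 (chi (S v0)))))"
proof -
  interpret SS scale H D K P G M Q S X chi v0 d m
    using assms by (unfold_locales) auto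
  show ?thesis by (rule main)
qed

end
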